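(* Suppose $(P,n,a,b)$ is good. Then there exists $f\in\mathcal{B}$ whose initial part (the sum of its terms of degree at most $n$) is $P$, and such that $f$ has a zero of order at least two in $(a,b)$.
   Context: $\mathcal{B}=\{1+\sum_{k=1}^\infty a_k x^k : a_k\in\{-1,0,1\}\}$ and $\mathcal{B}_n$ is the set of polynomials $1+\sum_{k=1}^n a_kx^k$ with $a_k\in\{-1,0,1\}$. A quadruple $(P,n,a,b)$ is called good if $P\in\mathcal{B}_n$, $0.5<a<b<1$, $P(a)>a^{n+1}/(1-a)$, $P(b)>b^{n+1}/(1-b)$, $P(x)>0$ for all $x\in[a,b]$, and there exists $x\in(a,b)$ with $P(x)<x^{n+1}/(1-x)$. *)

theory Defs
  imports "HOL-Analysis.Analysis" "HOL-Computational_Algebra.Polynomial"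
begin

definition pseries :: "(nat \<Rightarrow> real) \<Rightarrow> real \<Rightarrow> real" where
  "pseries c x = (\<Sum>k. c k * x ^ k)"

definition in_B :: "(nat \<Rightarrow> real) \<Rightarrow> bool" where
  "in_B c \<longleftrightarrow> c 0 = 1 \<and> (\<forall>k\<ge>1. c k \<in> {-1, 0, 1})"

definition in_Bn :: "nat \<Rightarrow> real poly \<Rightarrow> bool" where
  "in_Bn n P \<longleftrightarrow> degree P \<le> n \<and> coeff P 0 = 1 \<and> (\<forall>k\<in>{1..n}. coeff P k \<in> {-1, 0, 1})"

definition good :: "real poly \<Rightarrow> nat \<Rightarrow> real \<Rightarrow> real \<Rightarrow> bool" where
  "good P n a b \<longleftrightarrow> in_Bn n P \<and> 0.5 < a \<and> a < b \<and> b < 1 \<and>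
     poly P a > a ^ (n + 1) / (1 - a) \<and>
     poly P b > b ^ (n + 1) / (1 - b) \<and>
     (\<forall>x\<in>{a..b}. poly P x > 0) \<and>
     (\<exists>x\<in>{a<..<b}. poly P x < x ^ (n + 1) / (1 - x))"

end

theory Submission
  imports Defs
begin

lemma summ_c:
  assumes "\<forall>j. \<bar>c j\<bar> \<le> (1::real)" "\<bar>x\<bar> < 1"
  shows "summable (\<lambda>j. c j * x^j)"
proof (rule summable_comparison_test[where g="\<lambda>j. \<bar>x\<bar>^j"])
  show "\<exists>N. \<forall>n\<ge>N. norm (c n * x ^ n) \<le> \<bar>x\<bar> ^ n"
    using assms(1) by (auto simp: abs_mult power_abs intro!: mult_left_le_one_le)
  show "summable (\<lambda>j. \<bar>x\<bar>^j)" using assms(2) by simp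
qed

lemma pseries_bound:
  assumes c: "\<forall>j. \<bar>c j\<bar> \<le> 1" and x: "0 \<le> x" "x < 1"
  shows "\<bar>pseries c x - (\<Sum>j<N. c j * x^j)\<bar> \<le> x^N/(1-x)"
proof -
  have s: "summable (\<lambda>j. c j * x^j)" using summ_c[OF c] x by simp
  have e: "pseries c x - (\<Sum>j<N. c j * x^j) = (\<Sum>j. c (j+N) * x^(j+N))"
    unfolding pseries_def using suminf_split_initial_segment[OF s, of N] by simp
  have g: "(\<lambda>j. x^N * x^j) sums (x^N * (1/(1-x)))"
    using x by (intro sums_mult geometric_sums) auto
  have s2: "summable (\<lambda>j. c (j+N) * x^(j+N))" using s summable_iff_shift[of "\<lambda>j. c j * x^j" N] by simp
  have b: "\<bar>c (j+N) * x^(j+N)\<bar> \<le> x^N * x^j" for j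
  proof -
    have "\<bar>c (j+N)\<bar> * (x^N * x^j) \<le> 1 * (x^N * x^j)"
      using c x by (intro mult_right_mono) auto
    then show ?thesis using x by (simp add: abs_mult power_add mult_ac)
  qed
  have gs: "summable (\<lambda>j. x^N * x^j)" using g by (rule sums_summable)
  have gm: "(\<lambda>j. - (x^N * x^j)) sums (- (x^N * (1/(1-x))))" using g by (rule sums_minus)
  have "(\<Sum>j. c (j+N) * x^(j+N)) \<le> (\<Sum>j. x^N * x^j)"
  proof (rule suminf_le)
    show "c (j+N) * x^(j+N) \<le> x^N * x^j" for j using b[of j] by linarith
  qed (rule s2, rule gs)
  moreover have "(\<Sum>j. - (x^N * x^j)) \<le> (\<Sum>j. c (j+N) * x^(j+N))"
  proof (rule suminf_le)
    show "- (x^N * x^j) \<le> c (j+N) * x^(j+N)" for j using b[of j] by linarith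
    show "summable (\<lambda>j. - (x^N * x^j))" using gm by (rule sums_summable)
  qed (rule s2)
  moreover have "(\<Sum>j. - (x^N * x^j)) = - (x^N * (1/(1-x)))"
    using gm by (rule sums_unique[symmetric])
  moreover have "(\<Sum>j. x^N * x^j) = x^N * (1/(1-x))"
    using g by (rule sums_unique[symmetric])
  ultimately show ?thesis unfolding e by (simp add: abs_le_iff)
qed

definition Sf :: "(nat \<Rightarrow> real) \<Rightarrow> nat \<Rightarrow> real \<Rightarrow> real" where
  "Sf p N x = (\<Sum>j<N. p j * x^j)"

primrec pre :: "real poly \<Rightarrow> nat \<Rightarrow> real \<Rightarrow> real \<Rightarrow> nat \<Rightarrow> nat \<Rightarrow> real" where
  "pre P n a b 0 = (\<lambda>j. coeff P j)"
| "pre P n a b (Suc m) = (pre P n a b m)(n+1+m :=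
     (if \<exists>x\<in>{a..b}. Sf (pre P n a b m) (n+1+m) x + x^(n+1+m) - x^(n+2+m)/(1-x) \<le> 0
      then 1 else -1))"

lemma pre_stable: "j < n+1+m \<Longrightarrow> pre P n a b (m+k) j = pre P n a b m j"
  by (induction k) auto

lemma pre_low: "j \<le> n \<Longrightarrow> pre P n a b m j = coeff P j"
  by (induction m) auto

lemma pre_digit: "n < j \<Longrightarrow> j < n+1+m \<Longrightarrow> pre P n a b m j \<in> {-1,1}"
  by (induction m) auto

lemma pre_c: assumes "j < n+1+m" shows "pre P n a b (Suc j) j = pre P n a b m j"
proof (cases "m \<le> Suc j")
  case True
  then show ?thesis using pre_stable[OF assms, of P a b "Suc j - m"] by simp
next
  case False
  then show ?thesis using pre_stable[of j n "Suc j" P a b "m - Suc j"] by simp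
qed

lemma Sf_step: "Sf (pre P n a b (Suc m)) (n+1+Suc m) x
   = Sf (pre P n a b m) (n+1+m) x + pre P n a b (Suc m) (n+1+m) * x^(n+1+m)"
proof -
  have "Sf (pre P n a b (Suc m)) (n+1+m) x = Sf (pre P n a b m) (n+1+m) x"
    unfolding Sf_def by (intro sum.cong) auto
  moreover have "n+1+Suc m = Suc (n+1+m)" by simp
  ultimately show ?thesis unfolding Sf_def by (simp only: sum.lessThan_Suc)
qed

lemma geo_id: "(x::real) < 1 \<Longrightarrow> x^(Suc N)/(1-x) = x^N/(1-x) - x^N"
  by (simp add: field_simps)

lemma geo_half: assumes "1/2 \<le> (x::real)" "x < 1" shows "x^N \<le> x^(Suc N)/(1-x)"
proof -
  have "x^N * (1-x) \<le> x^N * x" using assms by (intro mult_left_mono) auto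
  then show ?thesis using assms by (simp add: field_simps)
qed

lemma deriv_ps:
  assumes c: "\<forall>j. \<bar>c j\<bar> \<le> (1::real)" and x: "\<bar>x\<bar> < 1"
  shows "\<exists>D. (pseries c has_real_derivative D) (at x)"
proof -
  define K where "K = (1 + \<bar>x\<bar>)/2"
  have K: "\<bar>x\<bar> < K" "K < 1" "0 < K" using x by (auto simp: K_def)
  have "summable (\<lambda>j. c j * K^j)" using summ_c[OF c] K by simp
  from termdiffs_strong[OF this, of x] K show ?thesis
    unfolding pseries_def[abs_def] by auto
qed

theorem corollary3p2:
  fixes P :: "real poly" and n :: nat and a b :: real
  assumes "good P n a b"
  shows "\<exists>c. in_B c \<and> (\<forall>k\<le>n. c k = coeff P k) \<and>
           (\<exists>x0\<in>{a<..<b}. pseries c x0 = 0 \<and> (pseries c has_real_derivative 0) (at x0))"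
proof -
  from assms have inBn: "in_Bn n P" and ab: "1/2 < a" "a < b" "b < 1"
    and Pa: "poly P a > a ^ (n + 1) / (1 - a)" and Pb: "poly P b > b ^ (n + 1) / (1 - b)"
    and Ppos: "\<forall>x\<in>{a..b}. poly P x > 0"
    and ex1: "\<exists>x\<in>{a<..<b}. poly P x < x ^ (n + 1) / (1 - x)"
    unfolding good_def by auto
  have deg: "degree P \<le> n" and c0: "coeff P 0 = 1" and cP: "\<forall>k\<in>{1..n}. coeff P k \<in> {-1, 0, 1}"
    using inBn unfolding in_Bn_def by auto
  have xr: "1/2 \<le> x \<and> x < 1 \<and> 0 < x" if "x \<in> {a..b}" for x using that ab by auto
  define pr where "pr = pre P n a b"
  define c where "c = (\<lambda>j. pr (Suc j) j)"
  have cpre: "c j = pr m j" if "j < n+1+m" for j m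
    unfolding c_def pr_def using pre_c[OF that] by simp
  have SfC: "Sf (pr m) (n+1+m) x = (\<Sum>j<n+1+m. c j * x^j)" for m x
    unfolding Sf_def by (intro sum.cong) (auto simp: cpre)
  have clow: "c k = coeff P k" if "k \<le> n" for k
    using cpre[of k 0] that pre_low[OF that] unfolding pr_def by simp
  have cdig: "c k \<in> {-1,1}" if "n < k" for k
    using cpre[of k k] that pre_digit[of n k k P a b] unfolding pr_def by simp
  have cB: "in_B c"
    unfolding in_B_def
  proof (intro conjI allI impI)
    show "c 0 = 1" using clow[of 0] c0 by simp
    fix k :: nat assume "1 \<le> k"
    then show "c k \<in> {-1,0,1}"
      using cP clow[of k] cdig[of k] by (cases "k \<le> n") auto
  qed
  have cb: "\<forall>j. \<bar>c j\<bar> \<le> 1"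
  proof
    fix j show "\<bar>c j\<bar> \<le> 1"
    proof (cases "j = 0")
      case False
      then have "c j \<in> {-1,0,1}" using cB unfolding in_B_def by auto
      then show ?thesis by auto
    qed (use cB in \<open>auto simp: in_B_def\<close>)
  qed
  have S0: "Sf (pr 0) (n+1) x = poly P x" for x
  proof -
    have "Sf (pr 0) (n+1) x = (\<Sum>i<n+1. coeff P i * x^i)"
      unfolding Sf_def pr_def by simp
    also have "\<dots> = (\<Sum>i\<le>degree P. coeff P i * x^i)"
      using deg by (intro sum.mono_neutral_right) (auto simp: coeff_eq_0)
    finally show ?thesis by (simp add: poly_altdef)
  qed
  define F where "F = pseries c"
  have Fb: "\<bar>F x - Sf (pr m) (n+1+m) x\<bar> \<le> x^(n+1+m)/(1-x)" if "0 \<le> x" "x < 1" for x m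
    unfolding F_def SfC using pseries_bound[OF cb that] .
  have inv: "(\<exists>x\<in>{a..b}. Sf (pr m) (n+1+m) x - x^(n+1+m)/(1-x) \<le> 0) \<and>
             (\<forall>x\<in>{a..b}. Sf (pr m) (n+1+m) x + x^(n+1+m)/(1-x) > 0)" for m
  proof (induction m)
    case 0
    show ?case
    proof
      show "\<exists>x\<in>{a..b}. Sf (pr 0) (n+1+0) x - x^(n+1+0)/(1-x) \<le> 0"
      proof -
        obtain x where "x \<in> {a<..<b}" "poly P x < x ^ (n + 1) / (1 - x)" using ex1 by auto
        then show ?thesis using S0[of x] by (intro bexI[of _ x]) auto
      qed
      show "\<forall>x\<in>{a..b}. Sf (pr 0) (n+1+0) x + x^(n+1+0)/(1-x) > 0"
      proof
        fix x assume x: "x \<in> {a..b}"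
        have "x^(n+1)/(1-x) > 0" using xr[OF x] by simp
        moreover have "poly P x > 0" using Ppos x by auto
        ultimately show "Sf (pr 0) (n+1+0) x + x^(n+1+0)/(1-x) > 0" using S0[of x] by simp
      qed
    qed
  next
    case (Suc m)
    define N where "N = n+1+m"
    have NS: "n+1+Suc m = Suc N" "n+2+m = Suc N" by (auto simp: N_def)
    define cond where "cond = (\<exists>x\<in>{a..b}. Sf (pr m) N x + x^N - x^(Suc N)/(1-x) \<le> 0)"
    have prS: "pr (Suc m) N = (if cond then 1 else -1)"
      unfolding pr_def cond_def N_def by (simp add: NS[unfolded N_def])
    have st: "Sf (pr (Suc m)) (Suc N) x = Sf (pr m) N x + (if cond then 1 else -1) * x^N" for x
      using Sf_step[of P n a b m x] prS unfolding pr_def N_def by simp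
    have IH1: "\<exists>x\<in>{a..b}. Sf (pr m) N x - x^N/(1-x) \<le> 0"
      and IH2: "\<forall>x\<in>{a..b}. Sf (pr m) N x + x^N/(1-x) > 0" using Suc.IH unfolding N_def by auto
    show ?case
    proof (cases cond)
      case True
      have st': "Sf (pr (Suc m)) (Suc N) x = Sf (pr m) N x + x^N" for x using st True by simp
      have A: "\<exists>x\<in>{a..b}. Sf (pr (Suc m)) (Suc N) x - x^(Suc N)/(1-x) \<le> 0"
      proof -
        obtain x where "x \<in> {a..b}" "Sf (pr m) N x + x^N - x^(Suc N)/(1-x) \<le> 0"
          using True unfolding cond_def by blast
        then show ?thesis by (intro bexI[of _ x]) (auto simp: st')
      qed
      have B: "\<forall>x\<in>{a..b}. Sf (pr (Suc m)) (Suc N) x + x^(Suc N)/(1-x) > 0"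
      proof
        fix x assume x: "x \<in> {a..b}"
        show "Sf (pr (Suc m)) (Suc N) x + x^(Suc N)/(1-x) > 0"
          using IH2 x geo_id[of x N] xr[OF x] by (auto simp: st')
      qed
      show ?thesis using A B by (simp only: NS)
    next
      case False
      have st': "Sf (pr (Suc m)) (Suc N) x = Sf (pr m) N x - x^N" for x using st False by simp
      have A: "\<exists>x\<in>{a..b}. Sf (pr (Suc m)) (Suc N) x - x^(Suc N)/(1-x) \<le> 0"
      proof -
        obtain x where x: "x \<in> {a..b}" "Sf (pr m) N x - x^N/(1-x) \<le> 0" using IH1 by auto
        then show ?thesis using geo_id[of x N] xr[OF x(1)] by (auto simp: st' intro!: bexI[of _ x])
      qed
      have B: "\<forall>x\<in>{a..b}. Sf (pr (Suc m)) (Suc N) x + x^(Suc N)/(1-x) > 0"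
      proof
        fix x assume x: "x \<in> {a..b}"
        have "Sf (pr m) N x + x^N - x^(Suc N)/(1-x) > 0" using False x unfolding cond_def by (meson not_le)
        then show "Sf (pr (Suc m)) (Suc N) x + x^(Suc N)/(1-x) > 0"
          using geo_half[of x N] xr[OF x] unfolding st' by linarith
      qed
      show ?thesis using A B by (simp only: NS)
    qed
  qed
  have Fnn: "F x \<ge> 0" if x: "x \<in> {a..b}" for x
  proof (rule ccontr)
    assume "\<not> F x \<ge> 0"
    then have neg: "- F x * (1-x) / 2 > 0" using xr[OF x] by (auto intro!: divide_pos_pos mult_pos_pos mult_neg_pos)
    obtain k where k: "x^k < - F x * (1-x) / 2" using real_arch_pow_inv[OF neg] xr[OF x] by auto
    have "x^(n+1+k) \<le> x^k" using xr[OF x] by (intro power_decreasing) auto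
    then have "2 * (x^(n+1+k)/(1-x)) < - F x" using k xr[OF x] by (simp add: field_simps)
    moreover have "Sf (pr k) (n+1+k) x + x^(n+1+k)/(1-x) > 0" using inv[of k] x by auto
    moreover have "\<bar>F x - Sf (pr k) (n+1+k) x\<bar> \<le> x^(n+1+k)/(1-x)" using Fb xr[OF x] by auto
    ultimately show False unfolding abs_le_iff by linarith
  qed
  have Dex: "\<exists>D. (F has_real_derivative D) (at x)" if "x \<in> {a..b}" for x
    unfolding F_def using deriv_ps[OF cb] xr[OF that] by auto
  have cont: "continuous_on {a..b} F"
  proof (intro continuous_at_imp_continuous_on ballI)
    fix x assume "x \<in> {a..b}"
    then obtain D where "(F has_real_derivative D) (at x)" using Dex by blast
    then show "isCont F x" by (rule DERIV_isCont)
  qed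
  obtain x0 where x0: "x0 \<in> {a..b}" "\<forall>y\<in>{a..b}. F x0 \<le> F y"
    using continuous_attains_inf[OF compact_Icc _ cont] ab by auto
  have F0: "F x0 \<le> 0"
  proof (rule ccontr)
    assume "\<not> F x0 \<le> 0"
    then have pos: "F x0 * (1-b) / 2 > 0" using ab by auto
    obtain k where k: "b^k < F x0 * (1-b) / 2" using real_arch_pow_inv[OF pos] ab by auto
    obtain xm where xm: "xm \<in> {a..b}" "Sf (pr k) (n+1+k) xm - xm^(n+1+k)/(1-xm) \<le> 0"
      using inv[of k] by auto
    have "\<bar>F xm - Sf (pr k) (n+1+k) xm\<bar> \<le> xm^(n+1+k)/(1-xm)" using Fb xr[OF xm(1)] by auto
    then have "F xm \<le> 2 * (xm^(n+1+k)/(1-xm))" using xm(2) unfolding abs_le_iff by linarith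
    moreover have "xm^(n+1+k)/(1-xm) \<le> b^k/(1-b)"
    proof (rule frac_le)
      have "xm^(n+1+k) \<le> xm^k" using xr[OF xm(1)] by (intro power_decreasing) auto
      also have "\<dots> \<le> b^k" using xr[OF xm(1)] xm(1) by (intro power_mono) auto
      finally show "xm^(n+1+k) \<le> b^k" .
      show "0 \<le> b^k" using ab by simp
      show "0 < 1 - b" using ab by simp
      show "1 - b \<le> 1 - xm" using xm(1) by simp
    qed
    moreover have "2 * (b^k/(1-b)) < F x0"
    proof -
      have "b^k * 2 < F x0 * (1-b)" using k by simp
      then have "b^k * 2 / (1-b) < F x0" using ab by (simp add: pos_divide_less_eq)
      then show ?thesis by (simp add: mult.commute)
    qed
    moreover have "F x0 \<le> F xm" using x0 xm by auto
    ultimately show False by linarith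
  qed
  have Fx0: "F x0 = 0" using F0 Fnn[OF x0(1)] by simp
  have Fend: "F y > 0" if "y = a \<or> y = b" for y
  proof -
    have y: "y \<in> {a..b}" using that ab by auto
    have "\<bar>F y - Sf (pr 0) (n+1+0) y\<bar> \<le> y^(n+1+0)/(1-y)" using Fb[of y 0] xr[OF y] by simp
    then have "F y \<ge> poly P y - y^(n+1)/(1-y)" using S0[of y] unfolding abs_le_iff by simp
    moreover have "poly P y > y^(n+1)/(1-y)" using that
    proof
      assume "y = a" then show ?thesis using Pa by simp
    next
      assume "y = b" then show ?thesis using Pb by simp
    qed
    ultimately show ?thesis by linarith
  qed
  have x0o: "x0 \<in> {a<..<b}"
  proof -
    have "x0 \<noteq> a" "x0 \<noteq> b" using Fend[of x0] Fx0 by auto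
    then show ?thesis using x0(1) by auto
  qed
  obtain D where D: "(F has_real_derivative D) (at x0)" using Dex x0(1) by auto
  have "D = 0"
  proof (rule DERIV_local_min[OF D])
    show "0 < min (x0 - a) (b - x0)" using x0o by auto
    show "\<forall>y. \<bar>x0 - y\<bar> < min (x0 - a) (b - x0) \<longrightarrow> F x0 \<le> F y"
    proof (intro allI impI)
      fix y assume "\<bar>x0 - y\<bar> < min (x0 - a) (b - x0)"
      then have "y \<in> {a..b}" by (auto simp: abs_less_iff)
      then show "F x0 \<le> F y" using x0(2) by blast
    qed
  qed
  then have "(pseries c has_real_derivative 0) (at x0)" "pseries c x0 = 0"
    using D Fx0 unfolding F_def by simp_all
  then show ?thesis using cB clow x0o by (intro exI[of _ c] conjI bexI[of _ x0]) auto
qed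

end
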